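(* Let $1<a_1<a_2$ be coprime integers. For every $r\in\left(0,\frac{a_2}{a_1+a_2}\right)$ there exists $T$ such that if $t\ge T$, then $\mu_t'(r)<-\frac{1}{a_2}$.
   Context: For $t\in[1,\infty)$ and $(u,v)\in\mathbb{R}^2$, $\|(u,v)\|_t=(|u|^t+|v|^t)^{1/t}$. Define $\mu_t(r)=\left\|\left(\frac{1-r}{a_1},\frac{r}{a_2}\right)\right\|_t$ for $r\in[0,1]$; $\mu_t'$ denotes the derivative with respect to $r$. *)

theory Defs
  imports "HOL-Analysis.Analysis"
begin

definition tnorm :: "real \<Rightarrow> real \<Rightarrow> real \<Rightarrow> real" where
  "tnorm t u v = (\<bar>u\<bar> powr t + \<bar>v\<bar> powr t) powr (1 / t)"

definition mu :: "int \<Rightarrow> int \<Rightarrow> real \<Rightarrow> real \<Rightarrow> real" where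
  "mu a1 a2 t r = tnorm t ((1 - r) / real_of_int a1) (r / real_of_int a2)"

end

theory Submission imports Defs begin
lemma l1: fixes s::real and g :: "real \<Rightarrow> real"
  assumes "0<s" "s<1" "filterlim g at_top at_top"
  shows "((\<lambda>t. s powr g t) \<longlongrightarrow> 0) at_top"
proof -
  have "ln s < 0" using assms by simp
  have "LIM t at_top. ln s * g t :> at_bot"
    by (rule filterlim_tendsto_neg_mult_at_bot[OF tendsto_const \<open>ln s < 0\<close> assms(3)])
  from filterlim_compose[OF exp_at_bot this]
  show ?thesis using assms by (simp add: powr_def o_def mult.commute)
qed
lemma ft1: "filterlim (\<lambda>t::real. t) at_top at_top" by (rule filterlim_ident)
lemma ft2: "filterlim (\<lambda>t::real. t - 1) at_top at_top"
proof -
  have "LIM x at_top. (-1::real) + x :> at_top"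
    by (rule filterlim_tendsto_add_at_top[OF tendsto_const filterlim_ident])
  then show ?thesis by (simp add: algebra_simps)
qed
lemma l3: "((\<lambda>t::real. 1/t - 1) \<longlongrightarrow> -1) at_top"
proof -
  have "((\<lambda>t::real. 1/t - 1) \<longlongrightarrow> 0 - 1) at_top"
    by (intro tendsto_intros tendsto_divide_0[OF tendsto_const] filterlim_at_top_imp_at_infinity filterlim_ident)
  then show ?thesis by simp
qed
lemma dg:
  fixes a1 a2 t r :: real
  assumes "0<a1" "0<a2" "1<t" "0<r" "r<1"
  shows "((\<lambda>x. (((1-x)/a1) powr t + (x/a2) powr t) powr (1/t)) has_real_derivative
     (1/t) * (((1-r)/a1) powr t + (r/a2) powr t) powr (1/t - 1) *
       (t * ((1-r)/a1) powr (t-1) * (-1/a1) + t * (r/a2) powr (t-1) * (1/a2))) (at r)"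
proof -
  have i1: "((\<lambda>x. (1-x)/a1) has_real_derivative -1/a1) (at r)"
    using assms by (auto intro!: derivative_eq_intros simp: field_simps)
  have i2: "((\<lambda>x. x/a2) has_real_derivative 1/a2) (at r)"
    using assms by (auto intro!: derivative_eq_intros simp: field_simps)
  have h1: "((\<lambda>x. ((1-x)/a1) powr t) has_real_derivative t * ((1-r)/a1) powr (t-1) * (-1/a1)) (at r)"
    using DERIV_fun_powr[OF i1, of t] assms by simp
  have h2: "((\<lambda>x. (x/a2) powr t) has_real_derivative t * (r/a2) powr (t-1) * (1/a2)) (at r)"
    using DERIV_fun_powr[OF i2, of t] assms by simp
  have pos: "0 < ((1-r)/a1) powr t + (r/a2) powr t" using assms by (intro add_pos_pos) auto
  show ?thesis
    using DERIV_fun_powr[OF DERIV_add[OF h1 h2] pos, of "1/t"] by simp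
qed

lemma key:
  fixes u v t :: real
  assumes "0<u" "0<v" "t \<noteq> 0"
  shows "(u powr t + v powr t) powr (1/t - 1) * u powr (t-1) = (1 + (v/u) powr t) powr (1/t - 1)"
    and "(u powr t + v powr t) powr (1/t - 1) * v powr (t-1) = (1 + (v/u) powr t) powr (1/t - 1) * (v/u) powr (t-1)"
proof -
  have vu: "v = (v/u) * u" using assms by simp
  have B: "u powr t + v powr t = u powr t * (1 + (v/u) powr t)"
    using assms by (simp add: powr_divide field_simps)
  have pw: "(u powr t) powr (1/t - 1) * u powr (t-1) = 1"
  proof (cases "t = 0")
    case True then show ?thesis using assms by blast
  next
    case False
    have "(u powr t) powr (1/t - 1) * u powr (t-1) = u powr (t*(1/t-1) + (t-1))"
      using assms by (simp add: powr_powr powr_add)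
    also have "t*(1/t-1) + (t-1) = 0" using False by (simp add: field_simps)
    finally show ?thesis using assms by simp
  qed
  have pos: "0 < 1 + (v/u) powr t" by (simp add: add_pos_nonneg)
  show "(u powr t + v powr t) powr (1/t - 1) * u powr (t-1) = (1 + (v/u) powr t) powr (1/t - 1)"
    using pw assms pos unfolding B by (simp add: powr_mult)
  have "v powr (t-1) = (v/u) powr (t-1) * u powr (t-1)"
    using assms by (simp add: powr_divide)
  then show "(u powr t + v powr t) powr (1/t - 1) * v powr (t-1) = (1 + (v/u) powr t) powr (1/t - 1) * (v/u) powr (t-1)"
    using pw assms pos unfolding B by (simp add: powr_mult)
qed

theorem corollary2:
  fixes a1 a2 :: int and r :: real
  assumes "1 < a1" and "a1 < a2" and "coprime a1 a2"
    and "0 < r" and "r < real_of_int a2 / real_of_int (a1 + a2)"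
  shows "\<exists>T::real. \<forall>t::real. t \<ge> T \<longrightarrow>
           deriv (mu a1 a2 t) r < - 1 / real_of_int a2"
proof -
  define A1 where "A1 = real_of_int a1"
  define A2 where "A2 = real_of_int a2"
  have A1: "1 < A1" and A12: "A1 < A2" using assms unfolding A1_def A2_def by simp_all
  have rlt: "r * (A1 + A2) < A2" using assms(5) A1 A12 unfolding A1_def A2_def
    by (simp add: field_simps)
  have r1: "r < 1" using rlt A1 A12 assms(4)
    by (smt (verit) mult_less_cancel_right2)
  define u where "u = (1-r)/A1"
  define v where "v = r/A2"
  have u0: "0 < u" using r1 A1 unfolding u_def by simp
  have v0: "0 < v" using assms(4) A1 A12 unfolding v_def by simp
  have vu: "v < u" unfolding u_def v_def using A1 A12 rlt
    by (simp add: field_simps)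
  define s where "s = v/u"
  have s0: "0 < s" and s1: "s < 1" unfolding s_def using u0 v0 vu by simp_all
  define F where "F t = (1 + s powr t) powr (1/t - 1) * (-1/A1 + s powr (t-1) / A2)" for t
  have der: "deriv (mu a1 a2 t) r = F t" if t1: "1 < t" for t
  proof -
    have ev: "eventually (\<lambda>x::real. x \<in> {0<..<1}) (nhds r)"
      using assms(4) r1 by (intro eventually_nhds_in_open) auto
    have "eventually (\<lambda>x. mu a1 a2 t x = (((1-x)/A1) powr t + (x/A2) powr t) powr (1/t)) (nhds r)"
      using ev
    proof (rule eventually_mono)
      fix x :: real assume "x \<in> {0<..<1}"
      then have "\<bar>(1-x)/A1\<bar> = (1-x)/A1" "\<bar>x/A2\<bar> = x/A2" using A1 A12 by auto
      then show "mu a1 a2 t x = (((1-x)/A1) powr t + (x/A2) powr t) powr (1/t)"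
        unfolding mu_def tnorm_def A1_def A2_def by simp
    qed
    then have D: "(mu a1 a2 t has_real_derivative
       (1/t) * (u powr t + v powr t) powr (1/t - 1) *
       (t * u powr (t-1) * (-1/A1) + t * v powr (t-1) * (1/A2))) (at r)"
      using dg[of A1 A2 t r] A1 A12 t1 assms(4) r1 unfolding u_def v_def
      by (subst DERIV_cong_ev[OF refl _ refl]) auto
    have "(1/t) * (u powr t + v powr t) powr (1/t - 1) *
       (t * u powr (t-1) * (-1/A1) + t * v powr (t-1) * (1/A2))
       = (u powr t + v powr t) powr (1/t - 1) * u powr (t-1) * (-1/A1)
         + (u powr t + v powr t) powr (1/t - 1) * v powr (t-1) / A2"
      using t1 by (simp add: field_simps)
    also have "\<dots> = (1 + s powr t) powr (1/t-1) * (-1/A1) + ((1 + s powr t) powr (1/t-1) * s powr (t-1)) / A2"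
      using key[OF u0 v0, of t] t1 unfolding s_def by simp
    also have "\<dots> = F t" unfolding F_def by (simp add: algebra_simps)
    finally show ?thesis using DERIV_imp_deriv[OF D] by simp
  qed
  have lim: "(F \<longlongrightarrow> (1 + 0) powr (-1) * (-1/A1 + 0 / A2)) at_top"
    unfolding F_def
    by (intro tendsto_intros l1[OF s0 s1 ft1] l1[OF s0 s1 ft2] l3) (use A1 A12 in auto)
  have "-1/A1 < -1/A2" using A1 A12 by (simp add: field_simps)
  then have "eventually (\<lambda>t. F t < -1/A2) at_top"
    using order_tendstoD(2)[OF lim] by simp
  moreover have "eventually (\<lambda>t::real. 1 < t) at_top" by (rule eventually_gt_at_top)
  ultimately have "eventually (\<lambda>t. deriv (mu a1 a2 t) r < -1/A2) at_top"
    by eventually_elim (simp add: der)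
  then obtain T where "\<forall>t\<ge>T. deriv (mu a1 a2 t) r < -1/A2"
    by (auto simp: eventually_at_top_linorder)
  then show ?thesis unfolding A2_def by blast
qed

end
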